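(* Assume the standing setup, let $\mu=(\mu_1,\dots,\mu_d)$ be an l.s.o.p. for $K[\Delta]$, and let $g\in k[x_1,\dots,x_n]$ be homogeneous of degree $d$. For a facet $F=\{j_1<\dots<j_d\}$ let $g_F(t_1,\dots,t_d)$ be obtained from $g$ by setting $x_i=0$ for $i\notin F$ and $x_{j_m}=t_m$, and let $X_{F,\mu,m}=(-1)^m\,\widehat{\mathrm{ev}}_\mu([F\cup\{0\}\smallsetminus\{j_m\}])\in\widehat K$ for $1\le m\le d$. Then each $X_{F,\mu,m}$ is nonzero and $$\deg_\mu(g)=\sum_{F\text{ facet of }\Delta}\frac{\epsilon_F\, g_F(X_{F,\mu,1},\dots,X_{F,\mu,d})}{\mathrm{ev}_\mu([F])\prod_{m=1}^dX_{F,\mu,m}}.$$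
   Context: Standing setup. $k$ is a field, $d\ge 2$ is an integer, and $\Delta$ is a simplicial complex of dimension $d-1$ with vertex set $V=\{1,\dots,n\}$. $\Delta$ is a connected $k$-homology manifold: $\Delta$ is connected and, for every nonempty face $G$, the link of $G$ has the same homology over $k$ as a sphere of dimension $d-|G|-1$. $\Delta$ is oriented: if $\mathrm{char}\,k\neq 2$, an orientation is a choice, for each facet, of an ordering of its vertices up to even permutations, such that for every $(d-2)$-face the two orientations induced on it by the two facets containing it are opposite; a facet ordered $v_1,\dots,v_d$ induces on the face omitting $v_i$ the ordering $v_1,\dots,\widehat{v_i},\dots,v_d$ if $i-1$ is even, and the opposite orientation if $i-1$ is odd. If $\mathrm{char}\,k=2$, every such $\Delta$ is regarded as oriented. For a facet $F=\{j_1<\dots<j_d\}$, $\epsilon_F\in\{\pm1\}$ is the sign of the permutation taking $(j_1,\dots,j_d)$ to the chosen ordering ($\epsilon_F=1$ if $\mathrm{char}\,k=2$). Let $K=k(a_{i,j}:1\le i\le d,\ 1\le j\le n)$ with the $a_{i,j}$ independent indeterminates, and let $K[\Delta]$ be the Stanley–Reisner ring of $\Delta$ over $K$ in variables $x_1,\dots,x_n$. For degree-one elements $\mu_i=\sum_j\mu_{i,j}x_j$ ($\mu_{i,j}\in K$), let $\mathrm{ev}_\mu:k[a_{i,j}]\to K$ be the $k$-algebra map $a_{i,j}\mapsto\mu_{i,j}$; $\mu$ is an l.s.o.p. for $K[\Delta]$ if and only if $\mathrm{ev}_\mu([F])\neq 0$ for every facet $F$, where for a $d$-element set $F=\{j_1<\dots<j_d\}$,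 $[F]$ is the determinant of the $d\times d$ matrix with $(i,m)$ entry $a_{i,j_m}$. For an l.s.o.p. $\mu$, $H_\mu(\Delta)=K[\Delta]/(\mu_1,\dots,\mu_d)$, $H^d_\mu(\Delta)$ is one-dimensional, and $\deg_\mu:H^d_\mu(\Delta)\to K$ is the isomorphism with $\deg_\mu(x_F)=\epsilon_F/\mathrm{ev}_\mu([F])$ for every facet $F$ (here $x_F=\prod_{j\in F}x_j$); $\deg_\mu(g)$ means $\deg_\mu$ of the image of $g$. Let $\widehat V=\{0\}\cup V$ and $\widehat K=K(a_{i,0}:1\le i\le d)$ with new indeterminates $a_{i,0}$; for a $d$-element subset $\widehat F=\{j_1<\dots<j_d\}\subseteq\widehat V$, $[\widehat F]$ is the determinant of the matrix with $(i,m)$ entry $a_{i,j_m}$. $\widehat{\mathrm{ev}}_\mu:k[a_{i,j}:1\le i\le d,0\le j\le n]\to\widehat K$ is the $k$-algebra map extending $\mathrm{ev}_\mu$ with $a_{i,0}\mapsto a_{i,0}$. *)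

theory Defs
  imports "HOL-Library.Poly_Mapping" "HOL-Library.Product_Lexorder"
    "HOL-Library.Function_Algebras"
    "HOL-Computational_Algebra.Fraction_Field"
    "HOL-Combinatorics.Permutations"
    "Jordan_Normal_Form.Determinant"
begin

definition simplicial_complex :: "nat \<Rightarrow> nat \<Rightarrow> nat set set \<Rightarrow> bool" where
  "simplicial_complex n d \<Delta> \<longleftrightarrow>
     {} \<in> \<Delta> \<and> (\<forall>F\<in>\<Delta>. \<forall>G. G \<subseteq> F \<longrightarrow> G \<in> \<Delta>) \<and>
     (\<forall>v\<in>{1..n}. {v} \<in> \<Delta>) \<and> \<Union>\<Delta> = {1..n} \<and>
     (\<forall>F\<in>\<Delta>. card F \<le> d) \<and> (\<exists>F\<in>\<Delta>. card F = d)"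

definition facets :: "nat set set \<Rightarrow> nat set set" where
  "facets \<Delta> = {F \<in> \<Delta>. \<forall>G\<in>\<Delta>. F \<subseteq> G \<longrightarrow> G = F}"

definition link :: "nat set set \<Rightarrow> nat set \<Rightarrow> nat set set" where
  "link \<Delta> G = {H \<in> \<Delta>. H \<inter> G = {} \<and> H \<union> G \<in> \<Delta>}"

text \<open>Connectedness (of the 1-skeleton, equivalently of the geometric realization).\<close>
definition connected_cx :: "nat set set \<Rightarrow> bool" where
  "connected_cx \<Delta> \<longleftrightarrow>
     (\<forall>u\<in>\<Union>\<Delta>. \<forall>v\<in>\<Union>\<Delta>. (u, v) \<in> {(a, b). {a, b} \<in> \<Delta>}\<^sup>*)"

text \<open>Chains: k-valued functions on faces of cardinality s (i.e. of dimension s-1);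
  s = 0 corresponds to the empty face (reduced homology in degree -1).\<close>
definition chains :: "'k itself \<Rightarrow> nat set set \<Rightarrow> nat \<Rightarrow> (nat set \<Rightarrow> 'k::field) set" where
  "chains _ L s = {f. \<forall>\<sigma>. f \<sigma> \<noteq> 0 \<longrightarrow> \<sigma> \<in> L \<and> card \<sigma> = s}"

definition bd :: "nat set set \<Rightarrow> (nat set \<Rightarrow> 'k::field) \<Rightarrow> (nat set \<Rightarrow> 'k)" where
  "bd L f = (\<lambda>\<tau>. \<Sum>\<sigma>\<in>{\<sigma>\<in>L. \<tau> \<subseteq> \<sigma> \<and> card \<sigma> = Suc (card \<tau>)}.
              (-1) ^ card {u\<in>\<sigma>. u < the_elem (\<sigma> - \<tau>)} * f \<sigma>)"

definition kdim :: "'k itself \<Rightarrow> (nat set \<Rightarrow> 'k::field) set \<Rightarrow> nat" where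
  "kdim _ S = vector_space.dim (\<lambda>(c::'k) (f::nat set \<Rightarrow> 'k) x. c * f x) S"

text \<open>L has the reduced homology over k of a sphere of dimension m (m \<ge> -1):
  the reduced Betti number in degree s-1 equals 1 if s-1 = m and 0 otherwise.\<close>
definition sphere_homology :: "'k::field itself \<Rightarrow> nat set set \<Rightarrow> int \<Rightarrow> bool" where
  "sphere_homology k L m \<longleftrightarrow>
     (\<forall>s::nat. kdim k {f \<in> chains k L s. bd L f = 0}
        = kdim k (bd L ` chains k L (Suc s)) + (if int s - 1 = m then 1 else 0))"

definition homology_manifold :: "'k::field itself \<Rightarrow> nat \<Rightarrow> nat set set \<Rightarrow> bool" where
  "homology_manifold k d \<Delta> \<longleftrightarrow>
     (\<forall>G\<in>\<Delta>. G \<noteq> {} \<longrightarrow> sphere_homology k (link \<Delta> G) (int d - int (card G) - 1))"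

definition lpos :: "nat list \<Rightarrow> nat \<Rightarrow> nat" where
  "lpos xs v = (LEAST i. i < length xs \<and> xs ! i = v)"

definition list_perm_sign :: "nat list \<Rightarrow> nat list \<Rightarrow> int" where
  "list_perm_sign xs ys = sign (\<lambda>i. if i < length ys then lpos xs (ys ! i) else i)"

text \<open>o assigns to each facet an ordering of its vertices; the ordering x omitting
  the vertex at (0-based) position i induces the orientation (-1)^i times that of the
  remaining list.  Two facets sharing a (d-2)-face induce opposite orientations on it.\<close>
definition is_orientation :: "nat \<Rightarrow> nat set set \<Rightarrow> (nat set \<Rightarrow> nat list) \<Rightarrow> bool" where
  "is_orientation d \<Delta> ori \<longleftrightarrow>
     (\<forall>F\<in>facets \<Delta>. distinct (ori F) \<and> set (ori F) = F) \<and>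
     (\<forall>F\<in>facets \<Delta>. \<forall>F'\<in>facets \<Delta>. F \<noteq> F' \<and> card (F \<inter> F') = d - 1 \<longrightarrow>
        (\<forall>v\<in>F - F'. \<forall>v'\<in>F' - F.
           (-1) ^ lpos (ori F) v * (-1) ^ lpos (ori F') v'
             * list_perm_sign (remove1 v (ori F)) (remove1 v' (ori F')) = -1))"

text \<open>Polynomial ring k[a_{i,j}] (variables indexed by pairs) and its fraction field.
  K-hat = K(a_{i,0}) is realised inside this fraction field; K is the subfield of
  fractions whose numerator and denominator only involve a_{i,j}, 1\<le>i\<le>d, 1\<le>j\<le>n.\<close>
type_synonym 'k Khat = "(((nat \<times> nat) \<Rightarrow>\<^sub>0 nat) \<Rightarrow>\<^sub>0 'k) fract"

definition of_k :: "'k::field \<Rightarrow> 'k Khat" where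
  "of_k c = Fract (Poly_Mapping.single 0 c) 1"

definition avar :: "nat \<Rightarrow> nat \<Rightarrow> 'k::field Khat" where
  "avar i j = Fract (Poly_Mapping.single (Poly_Mapping.single (i, j) 1) 1) 1"

definition Kfield :: "nat \<Rightarrow> nat \<Rightarrow> 'k::field Khat set" where
  "Kfield d n = {Fract p q | (p :: ((nat \<times> nat) \<Rightarrow>\<^sub>0 nat) \<Rightarrow>\<^sub>0 'k) q. q \<noteq> 0 \<and>
      (\<forall>m \<in> Poly_Mapping.keys p \<union> Poly_Mapping.keys q. Poly_Mapping.keys m \<subseteq> {1..d} \<times> {1..n})}"

definition bracket :: "nat \<Rightarrow> (nat \<Rightarrow> nat \<Rightarrow> 'a::comm_ring_1) \<Rightarrow> nat set \<Rightarrow> 'a" where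
  "bracket d c S = det (mat d d (\<lambda>(i, m). c (i + 1) (sorted_list_of_set S ! m)))"

text \<open>ev-hat_mu: a_{i,j} \<mapsto> mu_{i,j} for j \<ge> 1 and a_{i,0} \<mapsto> a_{i,0}.\<close>
definition hat_col :: "(nat \<Rightarrow> nat \<Rightarrow> 'k::field Khat) \<Rightarrow> nat \<Rightarrow> nat \<Rightarrow> 'k Khat" where
  "hat_col \<mu> i j = (if j = 0 then avar i 0 else \<mu> i j)"

text \<open>mu is an l.s.o.p.: ev_mu([F]) \<noteq> 0 for every facet F.\<close>
definition is_lsop :: "nat \<Rightarrow> nat set set \<Rightarrow> (nat \<Rightarrow> nat \<Rightarrow> 'k::field Khat) \<Rightarrow> bool" where
  "is_lsop d \<Delta> \<mu> \<longleftrightarrow> (\<forall>F\<in>facets \<Delta>. bracket d (hat_col \<mu>) F \<noteq> 0)"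

text \<open>X_{F,mu,m} for the vertex j = j_m of F (m = 1 + number of smaller vertices).\<close>
definition Xc :: "nat \<Rightarrow> (nat \<Rightarrow> nat \<Rightarrow> 'k::field Khat) \<Rightarrow> nat set \<Rightarrow> nat \<Rightarrow> 'k Khat" where
  "Xc d \<mu> F j = (-1) ^ (card {u\<in>F. u < j} + 1) * bracket d (hat_col \<mu>) (insert 0 F - {j})"

definition mdeg :: "(nat \<Rightarrow>\<^sub>0 nat) \<Rightarrow> nat" where
  "mdeg \<alpha> = (\<Sum>j\<in>Poly_Mapping.keys \<alpha>. Poly_Mapping.lookup \<alpha> j)"

definition Mons :: "nat \<Rightarrow> nat \<Rightarrow> (nat \<Rightarrow>\<^sub>0 nat) set" where
  "Mons n e = {\<alpha>. Poly_Mapping.keys \<alpha> \<subseteq> {1..n} \<and> mdeg \<alpha> = e}"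

definition homogeneous :: "nat \<Rightarrow> nat \<Rightarrow> ((nat \<Rightarrow>\<^sub>0 nat) \<Rightarrow>\<^sub>0 'k::field) \<Rightarrow> bool" where
  "homogeneous n d g \<longleftrightarrow> Poly_Mapping.keys g \<subseteq> Mons n d"

definition mono_of :: "nat set \<Rightarrow> (nat \<Rightarrow>\<^sub>0 nat)" where
  "mono_of F = (\<Sum>j\<in>F. Poly_Mapping.single j 1)"

definition mpoly_eval :: "((nat \<Rightarrow>\<^sub>0 nat) \<Rightarrow>\<^sub>0 'k::field) \<Rightarrow> (nat \<Rightarrow> 'k Khat) \<Rightarrow> 'k Khat" where
  "mpoly_eval g x = (\<Sum>\<alpha>\<in>Poly_Mapping.keys g. of_k (Poly_Mapping.lookup g \<alpha>) * (\<Prod>j\<in>Poly_Mapping.keys \<alpha>. x j ^ Poly_Mapping.lookup \<alpha> j))"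

definition eps :: "'k::field itself \<Rightarrow> (nat set \<Rightarrow> nat list) \<Rightarrow> nat set \<Rightarrow> 'k Khat" where
  "eps _ ori F = (if CHAR('k) = 2 then 1 else of_int (list_perm_sign (sorted_list_of_set F) (ori F)))"

text \<open>phi describes deg_mu on H^d_mu: the K-linear functional on K[x]_d given on
  degree-d monomials by phi, vanishing on (I_Delta + (mu_1,...,mu_d))_d, with
  deg_mu(x_F) = eps_F / ev_mu([F]) for every facet F.\<close>
definition is_deg_map :: "'k::field itself \<Rightarrow> nat \<Rightarrow> nat \<Rightarrow> nat set set \<Rightarrow> (nat set \<Rightarrow> nat list)
    \<Rightarrow> (nat \<Rightarrow> nat \<Rightarrow> 'k Khat) \<Rightarrow> ((nat \<Rightarrow>\<^sub>0 nat) \<Rightarrow> 'k Khat) \<Rightarrow> bool" where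
  "is_deg_map k n d \<Delta> ori \<mu> \<phi> \<longleftrightarrow>
     (\<forall>\<alpha>\<in>Mons n d. \<phi> \<alpha> \<in> Kfield d n) \<and>
     (\<forall>\<alpha>\<in>Mons n d. Poly_Mapping.keys \<alpha> \<notin> \<Delta> \<longrightarrow> \<phi> \<alpha> = 0) \<and>
     (\<forall>i\<in>{1..d}. \<forall>\<beta>\<in>Mons n (d - 1).
        (\<Sum>j=1..n. \<mu> i j * \<phi> (\<beta> + Poly_Mapping.single j 1)) = 0) \<and>
     (\<forall>F\<in>facets \<Delta>. \<phi> (mono_of F) = eps k ori F / bracket d (hat_col \<mu>) F)"

definition deg_eval :: "((nat \<Rightarrow>\<^sub>0 nat) \<Rightarrow> 'k::field Khat) \<Rightarrow> ((nat \<Rightarrow>\<^sub>0 nat) \<Rightarrow>\<^sub>0 'k) \<Rightarrow> 'k Khat" where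
  "deg_eval \<phi> g = (\<Sum>\<alpha>\<in>Poly_Mapping.keys g. of_k (Poly_Mapping.lookup g \<alpha>) * \<phi> \<alpha>)"

end

theory Submission imports Defs begin

type_synonym 'k P = "((nat \<times> nat) \<Rightarrow>\<^sub>0 nat) \<Rightarrow>\<^sub>0 'k"

definition nz :: "'k::field P \<Rightarrow> bool" where
  "nz p \<longleftrightarrow> (\<forall>m\<in>Poly_Mapping.keys p. \<forall>i. (i,0) \<notin> Poly_Mapping.keys m)"

lemma nz_0[simp]: "nz 0" by (simp add: nz_def)
lemma nz_1[simp]: "nz 1" by (simp add: nz_def)
lemma nz_add: "nz p \<Longrightarrow> nz q \<Longrightarrow> nz (p + q)"
  unfolding nz_def
proof (intro ballI allI)
  fix m i assume "\<forall>m\<in>Poly_Mapping.keys p. \<forall>i. (i, 0) \<notin> Poly_Mapping.keys m"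
    "\<forall>m\<in>Poly_Mapping.keys q. \<forall>i. (i, 0) \<notin> Poly_Mapping.keys m"
    "m \<in> Poly_Mapping.keys (p + q)"
  moreover have "m \<in> Poly_Mapping.keys p \<union> Poly_Mapping.keys q"
    using calculation(3) keys_add by (rule subsetD[rotated])
  ultimately show "(i, 0) \<notin> Poly_Mapping.keys m" by blast
qed
lemma nz_uminus: "nz p \<Longrightarrow> nz (- p)"
  unfolding nz_def by (metis keys_minus)

lemma keys_mon_add: "Poly_Mapping.keys ((a::(nat\<times>nat) \<Rightarrow>\<^sub>0 nat) + b) \<subseteq> Poly_Mapping.keys a \<union> Poly_Mapping.keys b"
  by (rule keys_add)

lemma nz_mult: "nz p \<Longrightarrow> nz q \<Longrightarrow> nz (p * q)"
  unfolding nz_def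
proof (intro ballI allI)
  fix m i assume p: "\<forall>m\<in>Poly_Mapping.keys p. \<forall>i. (i, 0) \<notin> Poly_Mapping.keys m"
    and q: "\<forall>m\<in>Poly_Mapping.keys q. \<forall>i. (i, 0) \<notin> Poly_Mapping.keys m"
    and m: "m \<in> Poly_Mapping.keys (p * q)"
  then obtain a b where "m = a + b" "a \<in> Poly_Mapping.keys p" "b \<in> Poly_Mapping.keys q"
    using keys_mult by blast
  then show "(i, 0) \<notin> Poly_Mapping.keys m" using p q keys_mon_add by blast
qed

definition free0 :: "'k::field Khat \<Rightarrow> bool" where
  "free0 x \<longleftrightarrow> (\<exists>p q. q \<noteq> 0 \<and> x = Fract p q \<and> nz p \<and> nz q)"

lemma free0_0[simp]: "free0 0"
  unfolding free0_def by (rule exI[of _ 0], rule exI[of _ 1]) (simp add: Zero_fract_def)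
lemma free0_1[simp]: "free0 1"
  unfolding free0_def by (rule exI[of _ 1], rule exI[of _ 1]) (simp add: One_fract_def)
lemma free0_add: "free0 x \<Longrightarrow> free0 y \<Longrightarrow> free0 (x + y)"
  unfolding free0_def
  apply clarify
  subgoal for a c b e
    by (rule exI[of _ "a * e + c * b"], rule exI[of _ "b * e"]) (auto simp add: nz_add nz_mult)
  done
lemma free0_mult: "free0 x \<Longrightarrow> free0 y \<Longrightarrow> free0 (x * y)"
  unfolding free0_def
  apply clarify
  subgoal for a c b e
    by (rule exI[of _ "a * c"], rule exI[of _ "b * e"]) (auto simp: nz_mult)
  done
lemma free0_uminus: "free0 x \<Longrightarrow> free0 (- x)"
  unfolding free0_def
  apply clarify
  subgoal for p q
    by (rule exI[of _ "- p"], rule exI[of _ "q"]) (auto simp: nz_uminus)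
  done
lemma free0_of_nat: "free0 (of_nat k :: 'k::field Khat)"
proof (induct k)
  case 0 show ?case by (simp only: of_nat_0 free0_0)
next
  case (Suc k)
  have "free0 (1 + of_nat k :: 'k Khat)" by (rule free0_add[OF free0_1 Suc])
  then show ?case by (simp only: of_nat_Suc)
qed
lemma free0_of_int: "free0 (of_int c :: 'k::field Khat)"
proof (cases "c \<ge> 0")
  case True
  then obtain k where "c = int k" using nonneg_eq_int by blast
  then have "(of_int c :: 'k Khat) = of_nat k" by (simp only: of_int_of_nat_eq)
  then show ?thesis using free0_of_nat by (simp only:)
next
  case False
  then have "- c \<ge> 0" by simp
  then obtain k where "- c = int k" using nonneg_eq_int by blast
  then have "c = - int k" by simp
  then have "(of_int c :: 'k Khat) = - of_nat k" by (simp only: of_int_minus of_int_of_nat_eq)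
  then show ?thesis using free0_uminus[OF free0_of_nat] by (simp only:)
qed
lemma free0_sum: "(\<And>i. i \<in> I \<Longrightarrow> free0 (f i)) \<Longrightarrow> free0 (sum f I)"
  by (induct I rule: infinite_finite_induct) (auto intro: free0_add)
lemma free0_prod: "(\<And>i. i \<in> I \<Longrightarrow> free0 (f i)) \<Longrightarrow> free0 (prod f I)"
  by (induct I rule: infinite_finite_induct) (auto intro: free0_mult)

lemma free0_det:
  assumes "A \<in> carrier_mat m m" "\<And>i j. i < m \<Longrightarrow> j < m \<Longrightarrow> free0 (A $$ (i,j))"
  shows "free0 (det A)"
  unfolding det_def'[OF assms(1)]
  apply (rule free0_sum)
  apply (rule free0_mult)
   apply (simp add: free0_of_int)
  apply (rule free0_prod)
  using assms(2) by (simp add: permutes_in_image)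

lemma Kfield_free0: assumes "x \<in> Kfield d n" shows "free0 x"
proof -
  obtain p q where pq: "x = Fract p q" "q \<noteq> 0"
    "\<forall>m \<in> Poly_Mapping.keys p \<union> Poly_Mapping.keys q. Poly_Mapping.keys m \<subseteq> {1..d}\<times>{1..n}"
    using assms unfolding Kfield_def by blast
  have "nz p" unfolding nz_def
  proof (intro ballI allI)
    fix m i assume "m \<in> Poly_Mapping.keys p"
    then have "Poly_Mapping.keys m \<subseteq> {1..d}\<times>{1..n}" using pq(3) by blast
    then show "(i, 0) \<notin> Poly_Mapping.keys m" by auto
  qed
  moreover have "nz q" unfolding nz_def
  proof (intro ballI allI)
    fix m i assume "m \<in> Poly_Mapping.keys q"
    then have "Poly_Mapping.keys m \<subseteq> {1..d}\<times>{1..n}" using pq(3) by blast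
    then show "(i, 0) \<notin> Poly_Mapping.keys m" by auto
  qed
  ultimately show ?thesis unfolding free0_def using pq by blast
qed
lemma lookup_single_mult:
  fixes t q :: "(nat\<times>nat) \<Rightarrow>\<^sub>0 nat" and p :: "'k::field P"
  shows "Poly_Mapping.lookup (Poly_Mapping.single t 1 * p) (t + q) = Poly_Mapping.lookup p q"
proof -
  have "Poly_Mapping.lookup (Poly_Mapping.single t 1 * p) (t + q)
     = Sum_any (\<lambda>l. (1 when t = l) * Sum_any (\<lambda>r. Poly_Mapping.lookup p r when t + q = l + r))"
    by (simp only: lookup_mult lookup_single)
  also have "\<dots> = Sum_any (\<lambda>l. (Sum_any (\<lambda>r. Poly_Mapping.lookup p r when t + q = l + r) when t = l))"
    by (simp only: when_mult mult_1_left)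
  also have "\<dots> = Sum_any (\<lambda>r. Poly_Mapping.lookup p r when t + q = t + r)"
    by (rule Sum_any_when_equal')
  also have "\<dots> = Sum_any (\<lambda>r. Poly_Mapping.lookup p r when q = r)"
    by (simp only: add_left_cancel)
  also have "\<dots> = Poly_Mapping.lookup p q"
    by (rule Sum_any_when_equal')
  finally show ?thesis .
qed

lemma lookup_single_mult_zero:
  fixes s :: "(nat\<times>nat) \<Rightarrow>\<^sub>0 nat" and p :: "'k::field P"
  assumes "Poly_Mapping.lookup s (i,0) = 0"
  shows "Poly_Mapping.lookup (Poly_Mapping.single (Poly_Mapping.single (i,0) 1) 1 * p) s = 0"
proof (rule ccontr)
  let ?t = "Poly_Mapping.single (i,0) (1::nat)"
  assume "Poly_Mapping.lookup (Poly_Mapping.single ?t 1 * p) s \<noteq> 0"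
  then have "s \<in> Poly_Mapping.keys (Poly_Mapping.single ?t 1 * p)"
    by (simp add: in_keys_iff)
  then have "s \<in> {a + b |a b. a \<in> Poly_Mapping.keys (Poly_Mapping.single ?t (1::'k)) \<and> b \<in> Poly_Mapping.keys p}"
    by (rule subsetD[OF keys_mult])
  then obtain b where "s = ?t + b" by auto
  then have "Poly_Mapping.lookup s (i,0) \<ge> 1" by (simp add: lookup_add)
  with assms show False by linarith
qed


lemma nz_prod: "(\<And>i. i \<in> I \<Longrightarrow> nz (f i)) \<Longrightarrow> nz (prod f I)"
  by (induct I rule: infinite_finite_induct) (simp_all add: nz_mult)

lemma sum_Fract_same:
  fixes a :: "nat \<Rightarrow> 'k::field P"
  assumes "finite I" "Q \<noteq> 0"
  shows "(\<Sum>i\<in>I. Fract (a i) Q) = Fract (\<Sum>i\<in>I. a i) Q"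
  using assms(1)
proof (induct I rule: finite_induct)
  case empty
  show ?case by (simp only: sum.empty Zero_fract_def eq_fract(3))
next
  case (insert x F)
  have "(\<Sum>i\<in>insert x F. Fract (a i) Q) = Fract (a x) Q + Fract (\<Sum>i\<in>F. a i) Q"
    using insert by simp
  also have "\<dots> = Fract (a x * Q + (\<Sum>i\<in>F. a i) * Q) (Q * Q)"
    using assms(2) by (rule add_fract[OF assms(2)])
  also have "\<dots> = Fract (Q * (a x + (\<Sum>i\<in>F. a i))) (Q * Q)"
    by (simp only: distrib_left mult.commute)
  also have "\<dots> = Fract (a x + (\<Sum>i\<in>F. a i)) Q"
    using assms(2) by (rule mult_fract_cancel)
  also have "\<dots> = Fract (\<Sum>i\<in>insert x F. a i) Q"
    using insert(1,2) by simp
  finally show ?case .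
qed

lemma avar_lin_indep:
  fixes e :: "nat \<Rightarrow> 'k::field Khat"
  assumes fin: "finite I" and fr: "\<forall>i\<in>I. free0 (e i)"
    and sum0: "(\<Sum>i\<in>I. avar i 0 * e i) = 0" and kI: "k \<in> I"
  shows "e k = 0"
proof -
  have "\<forall>i\<in>I. \<exists>pq. snd pq \<noteq> 0 \<and> e i = Fract (fst pq) (snd pq) \<and> nz (fst pq) \<and> nz (snd pq)"
    using fr unfolding free0_def by auto
  then obtain f where f: "\<forall>i\<in>I. snd (f i) \<noteq> 0 \<and> e i = Fract (fst (f i)) (snd (f i)) \<and> nz (fst (f i)) \<and> nz (snd (f i))"
    by (rule bchoice[elim_format]) blast
  define p where "p i = fst (f i)" for i
  define q where "q i = snd (f i)" for i
  have q0: "\<And>i. i \<in> I \<Longrightarrow> q i \<noteq> 0" and ep: "\<And>i. i \<in> I \<Longrightarrow> e i = Fract (p i) (q i)"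
    and nzp: "\<And>i. i \<in> I \<Longrightarrow> nz (p i)" and nzq: "\<And>i. i \<in> I \<Longrightarrow> nz (q i)"
    using f unfolding p_def q_def by auto
  define Q where "Q = (\<Prod>i\<in>I. q i)"
  define R where "R i = (\<Prod>j\<in>I-{i}. q j)" for i
  define V :: "nat \<Rightarrow> 'k P" where "V i = Poly_Mapping.single (Poly_Mapping.single (i,0) 1) 1" for i
  have Q0: "Q \<noteq> 0" unfolding Q_def using fin q0 by (simp add: prod_zero_iff)
  have R0: "R i \<noteq> 0" for i unfolding R_def using fin q0 by (simp add: prod_zero_iff)
  have QR: "i \<in> I \<Longrightarrow> Q = R i * q i" for i
    unfolding Q_def R_def using fin by (simp add: prod.remove mult.commute)
  have trm: "avar i 0 * e i = Fract (V i * p i * R i) Q" if iI: "i \<in> I" for i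
  proof -
    have "avar i 0 * e i = Fract (V i * p i) (1 * q i)"
      unfolding avar_def V_def ep[OF iI] by (simp only: mult_fract)
    also have "\<dots> = Fract (R i * (V i * p i)) (R i * q i)"
      by (simp only: mult_1_left mult_fract_cancel[OF R0])
    also have "\<dots> = Fract (V i * p i * R i) Q"
      using QR[OF iI] by (simp only: mult.commute)
    finally show ?thesis .
  qed
  have "(\<Sum>i\<in>I. avar i 0 * e i) = (\<Sum>i\<in>I. Fract (V i * p i * R i) Q)"
    using trm by (rule sum.cong[OF refl])
  also have "\<dots> = Fract (\<Sum>i\<in>I. V i * p i * R i) Q"
    by (rule sum_Fract_same[OF fin Q0])
  finally have "Fract (\<Sum>i\<in>I. V i * p i * R i) Q = 0" using sum0 by simp
  then have "Fract (\<Sum>i\<in>I. V i * p i * R i) Q = Fract 0 1" by (simp only: Zero_fract_def)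
  then have S0: "(\<Sum>i\<in>I. V i * (p i * R i)) = 0"
    using Q0 by (simp add: eq_fract(1) mult.assoc)
  define Pk where "Pk = p k * R k"
  have nzPk: "nz Pk" unfolding Pk_def R_def
    using nzp[OF kI] nzq by (intro nz_mult nz_prod) auto
  have "Poly_Mapping.lookup Pk m = 0" for m
  proof (cases "m \<in> Poly_Mapping.keys Pk")
    case False then show ?thesis by (simp add: in_keys_iff)
  next
    case True
    then have m0: "\<And>i. Poly_Mapping.lookup m (i,0) = 0"
      using nzPk unfolding nz_def by (simp add: in_keys_iff)
    define s where "s = Poly_Mapping.single (k,0) 1 + m"
    have other: "Poly_Mapping.lookup (V i * (p i * R i)) s = 0" if "i \<noteq> k" for i
      unfolding V_def
      by (rule lookup_single_mult_zero) (use that in \<open>simp add: s_def lookup_add m0 lookup_single when_def\<close>)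
    have "0 = Poly_Mapping.lookup (\<Sum>i\<in>I. V i * (p i * R i)) s" using S0 by simp
    also have "\<dots> = (\<Sum>i\<in>I. Poly_Mapping.lookup (V i * (p i * R i)) s)"
      by (simp only: lookup_sum)
    also have "\<dots> = Poly_Mapping.lookup (V k * (p k * R k)) s"
      using fin kI other by (simp add: sum.remove)
    also have "\<dots> = Poly_Mapping.lookup Pk m"
      unfolding V_def s_def Pk_def by (rule lookup_single_mult)
    finally show ?thesis by simp
  qed
  then have "Pk = 0" by (intro poly_mapping_eqI) simp
  then have "p k = 0" unfolding Pk_def using R0 by simp
  then show ?thesis using ep[OF kI] by (simp add: eq_fract(3) Zero_fract_def)
qed

lemma free0_neg1_pow: "free0 ((-1::'k::field Khat) ^ n)"
  by (induct n) (simp_all add: free0_mult free0_uminus)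

section \<open>Lists\<close>

lemma sl_eq:
  assumes "finite A" "sorted xs" "distinct xs" "set xs = (A::nat set)"
  shows "sorted_list_of_set A = xs"
  by (rule sorted_distinct_set_unique) (use assms in auto)

definition dell :: "nat \<Rightarrow> 'a list \<Rightarrow> 'a list" where
  "dell p L = take p L @ drop (Suc p) L"

lemma dell_remove1:
  assumes "distinct L" "p < length L"
  shows "remove1 (L ! p) L = dell p L"
proof -
  have L: "L = take p L @ L ! p # drop (Suc p) L" using assms(2) by (rule id_take_nth_drop)
  have dd: "distinct (take p L @ L ! p # drop (Suc p) L)" using assms(1) L by metis
  have "L ! p \<notin> set (take p L)"
    using dd by (simp only: distinct_append) auto
  then have "remove1 (L ! p) (take p L @ L ! p # drop (Suc p) L) = take p L @ drop (Suc p) L"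
    by (simp add: remove1_append)
  then show ?thesis using L unfolding dell_def by simp
qed

lemma dell_length: "p < length L \<Longrightarrow> length (dell p L) = length L - 1"
  unfolding dell_def by simp

lemma dell_nth:
  assumes "p < length L" "m < length L - 1"
  shows "dell p L ! m = L ! (if m < p then m else Suc m)"
  using assms unfolding dell_def by (auto simp: nth_append min_def)

lemma dell_set:
  assumes "distinct L" "p < length L"
  shows "set (dell p L) = set L - {L ! p}"
  using dell_remove1[OF assms] assms(1) by (metis set_remove1_eq)

lemma dell_sorted:
  assumes "sorted L" "distinct L" "p < length L"
  shows "sorted (dell p L)" "distinct (dell p L)"
  using dell_remove1[OF assms(2,3)] assms by (metis sorted_remove1, metis distinct_remove1)

lemma sorted_card_less:
  assumes "sorted L" "distinct L" "p < length L"
  shows "card {u \<in> set L. u < L ! p} = p"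
proof -
  have "{u \<in> set L. u < L ! p} = (\<lambda>q. L ! q) ` {..<p}"
  proof (rule equalityI; rule subsetI)
    fix u assume "u \<in> {u \<in> set L. u < L ! p}"
    then obtain q where q: "q < length L" "u = L ! q" "L ! q < L ! p" by (auto simp: in_set_conv_nth)
    have "q < p"
    proof (rule ccontr)
      assume "\<not> q < p" then have "L ! p \<le> L ! q" using assms q by (simp add: sorted_nth_mono)
      then show False using q by simp
    qed
    then show "u \<in> (\<lambda>q. L ! q) ` {..<p}" using q by auto
  next
    fix u assume "u \<in> (\<lambda>q. L ! q) ` {..<p}"
    then obtain q where q: "q < p" "u = L ! q" by auto
    have "L ! q \<le> L ! p" using assms q by (simp add: sorted_nth_mono)
    moreover have "L ! q \<noteq> L ! p" using assms q by (simp add: nth_eq_iff_index_eq)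
    ultimately show "u \<in> {u \<in> set L. u < L ! p}" using q assms by auto
  qed
  moreover have "inj_on (\<lambda>q. L ! q) {..<p}" using assms by (auto intro!: inj_on_nth)
  ultimately show ?thesis by (simp add: card_image)
qed

section \<open>Matrices\<close>

definition bmat :: "nat \<Rightarrow> (nat \<Rightarrow> nat \<Rightarrow> 'a::comm_ring_1) \<Rightarrow> nat list \<Rightarrow> 'a mat" where
  "bmat d c xs = mat d d (\<lambda>(i,m). c (i+1) (xs ! m))"

lemma bracket_bmat: "bracket d c S = det (bmat d c (sorted_list_of_set S))"
  unfolding bracket_def bmat_def by simp

lemma bmat_carrier: "bmat d c xs \<in> carrier_mat d d"
  unfolding bmat_def by simp

lemma mat_delete_bmat:
  "mat_delete (bmat d c xs) i m0 = mat (d-1) (d-1) (\<lambda>(r,m). c ((if r < i then r else Suc r) + 1) (xs ! (if m < m0 then m else Suc m)))"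
  unfolding mat_delete_def bmat_def by (rule eq_matI) auto

definition Nmat :: "nat \<Rightarrow> (nat \<Rightarrow> nat \<Rightarrow> 'a::comm_ring_1) \<Rightarrow> nat list \<Rightarrow> nat \<Rightarrow> 'a mat" where
  "Nmat d c xs i = mat (d-1) (d-1) (\<lambda>(r,m). c ((if r < i then r else Suc r) + 1) (xs ! m))"

lemma sorted_insert0:
  fixes F :: "nat set"
  assumes "finite F" "0 \<notin> F" "j \<in> F" "L = sorted_list_of_set F" "p < length L" "L ! p = j"
  shows "sorted_list_of_set (insert 0 F - {j}) = 0 # dell p L"
proof (rule sl_eq)
  have sL: "sorted L" "distinct L" "set L = F" using assms by auto
  have sd: "set (dell p L) = F - {j}" using dell_set[OF sL(2) assms(5)] sL assms by simp
  show "finite (insert 0 F - {j})" using assms by simp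
  show "sorted (0 # dell p L)" using dell_sorted[OF sL(1,2) assms(5)] by simp
  show "distinct (0 # dell p L)" using dell_sorted[OF sL(1,2) assms(5)] sd assms(2) by simp
  show "set (0 # dell p L) = insert 0 F - {j}" using sd assms(2,3) by auto
qed

lemma bracket_insert0_nonzero:
  fixes \<mu> :: "nat \<Rightarrow> nat \<Rightarrow> 'k::field Khat"
  assumes F: "finite F" "card F = d" "0 \<notin> F" "j \<in> F"
    and br: "bracket d (hat_col \<mu>) F \<noteq> 0"
    and mu: "\<forall>i\<in>{1..d}. \<forall>j\<in>F. free0 (\<mu> i j)"
  shows "bracket d (hat_col \<mu>) (insert 0 F - {j}) \<noteq> 0"
proof -
  define c where "c = hat_col \<mu>"
  define L where "L = sorted_list_of_set F"
  have sL: "sorted L" "distinct L" "set L = F" "length L = d" using F unfolding L_def by auto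
  obtain p where p: "p < d" "L ! p = j" using F(4) sL by (metis in_set_conv_nth)
  define L' where "L' = dell p L"
  have lenL': "length L' = d - 1" unfolding L'_def using dell_length[of p L] p sL by simp
  have L'nth: "m < d - 1 \<Longrightarrow> L' ! m = L ! (if m < p then m else Suc m)" for m
    unfolding L'_def using dell_nth[of p L m] p sL by simp
  have setL': "set L' = F - {j}" unfolding L'_def using dell_set[OF sL(2), of p] p sL by simp
  have s0: "sorted_list_of_set (insert 0 F - {j}) = 0 # L'"
    unfolding L'_def using sorted_insert0[OF F(1,3,4) L_def] p sL by simp
  define N where "N i = Nmat d c L' i" for i
  have delF: "mat_delete (bmat d c L) i p = N i" for i
    unfolding mat_delete_bmat N_def Nmat_def by (rule eq_matI) (auto simp: L'nth)
  have del0: "mat_delete (bmat d c (0 # L')) i 0 = N i" for i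
    unfolding mat_delete_bmat N_def Nmat_def by (rule eq_matI) auto
  have "\<exists>i0<d. det (N i0) \<noteq> 0"
  proof (rule ccontr)
    assume "\<not> (\<exists>i0<d. det (N i0) \<noteq> 0)"
    then have z: "\<And>i. i < d \<Longrightarrow> det (N i) = 0" by auto
    have "bracket d c F = det (bmat d c L)" unfolding bracket_bmat L_def ..
    also have "\<dots> = (\<Sum>i<d. bmat d c L $$ (i, p) * cofactor (bmat d c L) i p)"
      by (rule laplace_expansion_column[OF bmat_carrier p(1)])
    also have "\<dots> = 0" unfolding cofactor_def delF using z by simp
    finally show False using br unfolding c_def by simp
  qed
  then obtain i0 where i0: "i0 < d" "det (N i0) \<noteq> 0" by blast
  define e where "e i' = (-1) ^ (i' - 1) * det (N (i' - 1))" for i'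
  have "bracket d c (insert 0 F - {j}) = det (bmat d c (0 # L'))" unfolding bracket_bmat s0 ..
  also have "\<dots> = (\<Sum>i<d. bmat d c (0 # L') $$ (i, 0) * cofactor (bmat d c (0 # L')) i 0)"
    using p by (intro laplace_expansion_column[OF bmat_carrier]) simp
  also have "\<dots> = (\<Sum>i<d. avar (Suc i) 0 * e (Suc i))"
    unfolding cofactor_def del0 e_def by (intro sum.cong refl) (simp add: bmat_def c_def hat_col_def)
  also have "\<dots> = (\<Sum>i'\<in>Suc ` {..<d}. avar i' 0 * e i')"
    by (simp add: sum.reindex)
  finally have eq: "bracket d c (insert 0 F - {j}) = (\<Sum>i'\<in>Suc ` {..<d}. avar i' 0 * e i')" .
  have fr: "\<forall>i'\<in>Suc ` {..<d}. free0 (e i')"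
  proof
    fix i' assume "i' \<in> Suc ` {..<d}"
    then obtain i where i: "i < d" "i' = Suc i" by blast
    have ent: "free0 (c ((if r < i then r else Suc r) + 1) (L' ! m))" if rm: "r < d - 1" "m < d - 1" for r m
    proof -
      have mlt: "m < length L'" using rm lenL' by simp
      have Y0: "L' ! m \<in> set L'" by (rule nth_mem[OF mlt])
      have Y1: "L' ! m \<in> F" using Y0 setL' by blast
      have Y2: "L' ! m \<noteq> (0::nat)" using Y1 F(3) by metis
      have "(if r < i then r else Suc r) < d" using rm i by (cases "r < i") simp_all
      then have X: "(if r < i then r else Suc r) + 1 \<in> {1..d}" by simp
      have "free0 (\<mu> ((if r < i then r else Suc r) + 1) (L' ! m))" using mu X Y1 by blast
      then show ?thesis using Y2 unfolding c_def hat_col_def by simp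
    qed
    have "free0 (det (N i))" unfolding N_def Nmat_def
      apply (rule free0_det[OF mat_carrier])
      subgoal for r m using ent[of r m] by simp
      done
    then show "free0 (e i')" unfolding e_def using i by (simp add: free0_mult free0_neg1_pow)
  qed
  show ?thesis
  proof
    assume "bracket d (hat_col \<mu>) (insert 0 F - {j}) = 0"
    then have "(\<Sum>i'\<in>Suc ` {..<d}. avar i' 0 * e i') = 0" using eq unfolding c_def by simp
    then have "e (Suc i0) = 0" using avar_lin_indep[OF _ fr] i0 by blast
    then show False using i0 unfolding e_def by simp
  qed
qed

lemma sum_sorted_list:
  fixes g :: "nat \<Rightarrow> 'a::comm_monoid_add"
  assumes "finite F" "L = sorted_list_of_set F"
  shows "(\<Sum>m<length L. g (L ! m)) = (\<Sum>j\<in>F. g j)"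
proof -
  have "bij_betw ((!) L) {..<length L} F"
    by (rule bij_betw_nth) (use assms in auto)
  then show ?thesis by (rule sum.reindex_bij_betw)
qed

lemma laplace_X:
  fixes \<mu> :: "nat \<Rightarrow> nat \<Rightarrow> 'k::field Khat" and F :: "nat set"
  assumes F: "finite F" "card F = d" "0 \<notin> F" and i: "i \<in> {1..d}"
  shows "(\<Sum>j\<in>F. \<mu> i j * Xc d \<mu> F j) = - (avar i 0 * bracket d (hat_col \<mu>) F)"
proof -
  define c where "c = hat_col \<mu>"
  define L where "L = sorted_list_of_set F"
  have sL: "sorted L" "distinct L" "set L = F" "length L = d" using F unfolding L_def by auto
  define B where "B = mat (Suc d) (Suc d) (\<lambda>(r,m). c (if r = 0 then i else r) ((0 # L) ! m))"
  have Bc: "B \<in> carrier_mat (Suc d) (Suc d)" unfolding B_def by (rule mat_carrier)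
  have "row B 0 = row B i"
    by (rule eq_vecI) (use i in \<open>auto simp: B_def\<close>)
  then have detB: "det B = 0"
    by (intro det_identical_rows[OF Bc, of 0 i]) (use i in auto)
  have del: "mat_delete B 0 m = bmat d c (dell m (0 # L))" if m: "m < Suc d" for m
    unfolding mat_delete_def B_def bmat_def
    by (rule eq_matI) (use m sL in \<open>auto simp: dell_nth\<close>)
  have "det B = (\<Sum>m<Suc d. B $$ (0, m) * cofactor B 0 m)"
    by (rule laplace_expansion_row[OF Bc]) simp
  also have "\<dots> = (\<Sum>m<Suc d. B $$ (0, m) * ((-1) ^ m * det (bmat d c (dell m (0 # L)))))"
    unfolding cofactor_def by (intro sum.cong refl) (simp add: del)
  also have "\<dots> = avar i 0 * bracket d c F + (\<Sum>m<d. \<mu> i (L ! m) * Xc d \<mu> F (L ! m))"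
  proof -
    have t0: "B $$ (0, 0) * ((-1) ^ 0 * det (bmat d c (dell 0 (0 # L)))) = avar i 0 * bracket d c F"
      by (simp add: B_def c_def hat_col_def dell_def bracket_bmat L_def)
    have tS: "B $$ (0, Suc m) * ((-1) ^ Suc m * det (bmat d c (dell (Suc m) (0 # L))))
        = \<mu> i (L ! m) * Xc d \<mu> F (L ! m)" if m: "m < d" for m
    proof -
      have Lm: "L ! m \<in> F" "L ! m \<noteq> 0" using m sL F(3) nth_mem by (metis, metis)
      have dS: "dell (Suc m) (0 # L) = 0 # dell m L" unfolding dell_def by simp
      have so: "sorted_list_of_set (insert 0 F - {L ! m}) = 0 # dell m L"
        by (rule sorted_insert0[OF F(1) F(3) Lm(1) L_def]) (use m sL in auto)
      have cd: "card {u \<in> F. u < L ! m} = m"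
        using sorted_card_less[OF sL(1,2), of m] m sL by simp
      have "B $$ (0, Suc m) = \<mu> i (L ! m)"
        using m Lm unfolding B_def c_def hat_col_def by simp
      moreover have "det (bmat d c (dell (Suc m) (0 # L))) = bracket d c (insert 0 F - {L ! m})"
        unfolding bracket_bmat so dS ..
      ultimately show ?thesis unfolding Xc_def cd c_def by simp
    qed
    have sS: "(\<Sum>m<d. B $$ (0, Suc m) * ((-1) ^ Suc m * det (bmat d c (dell (Suc m) (0 # L)))))
        = (\<Sum>m<d. \<mu> i (L ! m) * Xc d \<mu> F (L ! m))"
      by (rule sum.cong[OF refl], rule tS, simp)
    show ?thesis
      by (simp only: sum.lessThan_Suc_shift t0 sS)
  qed
  finally have "0 = avar i 0 * bracket d c F + (\<Sum>m<d. \<mu> i (L ! m) * Xc d \<mu> F (L ! m))"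
    using detB by simp
  moreover have "(\<Sum>m<d. \<mu> i (L ! m) * Xc d \<mu> F (L ! m)) = (\<Sum>j\<in>F. \<mu> i j * Xc d \<mu> F j)"
    using sum_sorted_list[OF F(1) L_def, of "\<lambda>j. \<mu> i j * Xc d \<mu> F j"] sL by simp
  ultimately show ?thesis unfolding c_def by (simp add: eq_neg_iff_add_eq_0 add.commute)
qed

lemma indep:
  fixes \<mu> :: "nat \<Rightarrow> nat \<Rightarrow> 'k::field Khat" and F G :: "nat set"
  assumes F: "finite F" "card F = d" "0 \<notin> F" "j0 \<in> F" and G: "G \<subseteq> F - {j0}"
    and nzb: "bracket d (hat_col \<mu>) (insert 0 F - {j0}) \<noteq> 0"
    and rel: "\<forall>i\<in>{1..d}. (\<Sum>j\<in>G. \<mu> i j * v j) + avar i 0 * lam = 0"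
    and jG: "j \<in> G"
  shows "v j = 0"
proof -
  define c where "c = hat_col \<mu>"
  define C where "C = insert 0 F - {j0}"
  define LC where "LC = sorted_list_of_set C"
  have fC: "finite C" unfolding C_def using F by simp
  have cardC: "card C = d" unfolding C_def using F by simp
  have sLC: "distinct LC" "set LC = C" "length LC = d" using fC cardC unfolding LC_def by auto
  define M where "M = bmat d c LC"
  have Mc: "M \<in> carrier_mat d d" unfolding M_def by (rule bmat_carrier)
  have detM: "det M \<noteq> 0" using nzb unfolding M_def LC_def C_def c_def bracket_bmat .
  define coef where "coef x = (if x = 0 then lam else if x \<in> G then v x else 0)" for x
  define w where "w = vec d (\<lambda>m. coef (LC ! m))"
  have wc: "w \<in> carrier_vec d" unfolding w_def by simp
  have Mw: "M *\<^sub>v w = 0\<^sub>v d"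
  proof (rule eq_vecI)
    show "dim_vec (M *\<^sub>v w) = dim_vec (0\<^sub>v d)" using Mc by simp
  next
    fix i assume "i < dim_vec (0\<^sub>v d)"
    then have i: "i < d" by simp
    have "(M *\<^sub>v w) $ i = row M i \<bullet> w" using Mc i by simp
    also have "\<dots> = (\<Sum>m\<in>{0..<d}. row M i $ m * w $ m)" using wc unfolding scalar_prod_def by simp
    also have "\<dots> = (\<Sum>m\<in>{0..<d}. M $$ (i, m) * w $ m)" using Mc i by (intro sum.cong) auto
    also have "\<dots> = (\<Sum>m<length LC. c (Suc i) (LC ! m) * coef (LC ! m))"
      using i sLC unfolding M_def bmat_def w_def by (intro sum.cong) auto
    also have "\<dots> = (\<Sum>x\<in>C. c (Suc i) x * coef x)"
      by (rule sum_sorted_list[OF fC LC_def])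
    also have "\<dots> = c (Suc i) 0 * coef 0 + (\<Sum>x\<in>C - {0}. c (Suc i) x * coef x)"
    proof -
      have j00: "0 < j0" using F(3,4) by (metis neq0_conv)
      show ?thesis using fC j00 unfolding C_def by (subst sum.remove[of _ 0]) auto
    qed
    also have "(\<Sum>x\<in>C - {0}. c (Suc i) x * coef x) = (\<Sum>x\<in>G. \<mu> (Suc i) x * v x)"
    proof -
      have GC: "G \<subseteq> C - {0}" using G F(3) unfolding C_def by auto
      have "(\<Sum>x\<in>C - {0}. c (Suc i) x * coef x) = (\<Sum>x\<in>G. c (Suc i) x * coef x)"
        by (rule sum.mono_neutral_right) (use fC GC in \<open>auto simp: coef_def\<close>)
      also have "\<dots> = (\<Sum>x\<in>G. \<mu> (Suc i) x * v x)"
        using GC by (intro sum.cong refl) (auto simp: c_def hat_col_def coef_def)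
      finally show ?thesis .
    qed
    also have "c (Suc i) 0 * coef 0 + (\<Sum>x\<in>G. \<mu> (Suc i) x * v x) = 0"
      using rel i by (simp add: c_def hat_col_def coef_def add.commute)
    finally show "(M *\<^sub>v w) $ i = 0\<^sub>v d $ i" using i by simp
  qed
  have w0: "w = 0\<^sub>v d"
  proof (rule ccontr)
    assume "w \<noteq> 0\<^sub>v d"
    then have "\<exists>v. v \<in> carrier_vec d \<and> v \<noteq> 0\<^sub>v d \<and> M *\<^sub>v v = 0\<^sub>v d"
      using wc Mw by (intro exI[of _ w]) simp
    then have "det M = 0" using det_0_iff_vec_prod_zero[OF Mc] by simp
    then show False using detM by simp
  qed
  have jF: "j \<in> F - {j0}" using jG G by (rule subsetD[rotated])
  have jC: "j \<in> set LC" unfolding sLC(2) C_def using jF by simp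
  obtain m where m: "m < length LC" "LC ! m = j"
    using jC by (auto simp: in_set_conv_nth)
  have "w $ m = coef j" unfolding w_def using m sLC(3) by simp
  then have cj: "coef j = 0" using w0 m sLC(3) by simp
  have "j \<noteq> 0" using jF F(3) by (metis DiffD1)
  then show ?thesis using cj jG unfolding coef_def by simp
qed

section \<open>Complex facts\<close>

lemma vs_fun: "vector_space (\<lambda>(c::'k::field) (f::nat set \<Rightarrow> 'k) x. c * f x)"
  by unfold_locales (simp_all add: fun_eq_iff algebra_simps)

interpretation FV: vector_space "\<lambda>(c::'k::field) (f::nat set \<Rightarrow> 'k) x. c * f x"
  by (rule vs_fun)

lemma kdim_zero: "kdim TYPE('k::field) {0::nat set \<Rightarrow> 'k} = 0"
  unfolding kdim_def by (rule FV.dim_unique[of "{}"]) (auto simp: FV.independent_empty)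

lemma kdim_line:
  fixes \<delta> :: "nat set \<Rightarrow> 'k::field"
  assumes "\<delta> \<noteq> 0" "\<delta> \<in> V" "\<And>f. f \<in> V \<Longrightarrow> \<exists>c. f = (\<lambda>x. c * \<delta> x)"
  shows "kdim TYPE('k) V = 1"
  unfolding kdim_def
proof (rule FV.dim_unique[of "{\<delta>}"])
  show "{\<delta>} \<subseteq> V" using assms(2) by simp
  show "V \<subseteq> FV.span {\<delta>}"
  proof
    fix f assume "f \<in> V"
    then obtain c where "f = (\<lambda>x. c * \<delta> x)" using assms(3) by blast
    moreover have "\<delta> \<in> FV.span {\<delta>}" by (rule FV.span_base) simp
    ultimately show "f \<in> FV.span {\<delta>}" using FV.span_scale by blast
  qed
  show "FV.independent {\<delta>}" using assms(1) by simp
  show "card {\<delta>} = 1" by simp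
qed

lemma sc_sub: "simplicial_complex n d \<Delta> \<Longrightarrow> G \<in> \<Delta> \<Longrightarrow> G \<subseteq> {1..n}"
  unfolding simplicial_complex_def by blast

lemma sc_finite: assumes "simplicial_complex n d \<Delta>" shows "finite \<Delta>"
proof -
  have "\<Delta> \<subseteq> Pow {1..n}" using sc_sub[OF assms] by blast
  then show ?thesis by (rule finite_subset) simp
qed

lemma sc_card: "simplicial_complex n d \<Delta> \<Longrightarrow> G \<in> \<Delta> \<Longrightarrow> card G \<le> d"
  unfolding simplicial_complex_def by blast

lemma sc_down: "simplicial_complex n d \<Delta> \<Longrightarrow> G \<in> \<Delta> \<Longrightarrow> H \<subseteq> G \<Longrightarrow> H \<in> \<Delta>"
  unfolding simplicial_complex_def by blast

lemma facet_above:
  assumes sc: "simplicial_complex n d \<Delta>" and G: "G \<in> \<Delta>"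
  shows "\<exists>F\<in>facets \<Delta>. G \<subseteq> F"
proof -
  define S where "S = {H \<in> \<Delta>. G \<subseteq> H}"
  have fS: "finite S" unfolding S_def using sc_finite[OF sc] by simp
  have neS: "G \<in> S" unfolding S_def using G by simp
  define M where "M = Max (card ` S)"
  have "M \<in> card ` S" unfolding M_def using fS neS by (intro Max_in) auto
  then obtain F where F: "F \<in> S" "card F = M" by blast
  have mx: "H \<in> S \<Longrightarrow> card H \<le> card F" for H unfolding F(2) M_def using fS by simp
  have "F \<in> facets \<Delta>" unfolding facets_def
  proof (intro CollectI conjI ballI impI)
    show "F \<in> \<Delta>" using F(1) unfolding S_def by simp
  next
    fix H assume H: "H \<in> \<Delta>" "F \<subseteq> H"
    then have "H \<in> S" using F(1) unfolding S_def by auto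
    then have "card H \<le> card F" by (rule mx)
    moreover have "finite H" using sc_sub[OF sc H(1)] by (rule finite_subset) simp
    moreover have "card F \<le> card H" using \<open>finite H\<close> H(2) by (rule card_mono)
    ultimately have "card F = card H" by simp
    then show "H = F" using card_subset_eq[OF \<open>finite H\<close> H(2)] by simp
  qed
  then show ?thesis using F(1) unfolding S_def by auto
qed

lemma bd_empty_cx: "bd {{}} (f :: nat set \<Rightarrow> 'k::field) = 0"
proof (rule ext)
  fix \<tau> :: "nat set"
  have e: "{\<sigma> \<in> {{}}. \<tau> \<subseteq> \<sigma> \<and> card \<sigma> = Suc (card \<tau>)} = {}" by auto
  show "bd {{}} f \<tau> = 0 \<tau>" unfolding bd_def e by simp
qed

lemma facet_card:
  assumes sc: "simplicial_complex n d \<Delta>" and d1: "d \<ge> 1"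
    and hm: "homology_manifold TYPE('k::field) d \<Delta>" and F: "F \<in> facets \<Delta>"
  shows "card F = d"
proof -
  have FD: "F \<in> \<Delta>" and mx: "\<And>H. H \<in> \<Delta> \<Longrightarrow> F \<subseteq> H \<Longrightarrow> H = F"
    using F unfolding facets_def by auto
  obtain H where H: "H \<in> \<Delta>" "card H = d" using sc unfolding simplicial_complex_def by blast
  have Fne: "F \<noteq> {}"
  proof
    assume "F = {}"
    then have "H = F" using mx[OF H(1)] by simp
    then show False using H(2) d1 \<open>F = {}\<close> by simp
  qed
  have lk: "link \<Delta> F = {{}}"
  proof (rule equalityI; rule subsetI)
    fix K :: "nat set" assume "K \<in> link \<Delta> F"
    then have K: "K \<inter> F = {}" "K \<union> F \<in> \<Delta>" unfolding link_def by auto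
    have "K \<union> F = F" using mx[OF K(2)] by blast
    then show "K \<in> {{}}" using K(1) by blast
  next
    fix K :: "nat set" assume "K \<in> {{}}"
    then have "K = {}" by simp
    moreover have "{} \<in> \<Delta>" using sc unfolding simplicial_complex_def by blast
    ultimately show "K \<in> link \<Delta> F" unfolding link_def using FD by simp
  qed
  define m where "m = int d - int (card F) - 1"
  have sh: "sphere_homology TYPE('k) {{}} m"
    using hm FD Fne lk unfolding homology_manifold_def m_def by metis
  have eq: "kdim TYPE('k) {f \<in> chains TYPE('k) {{}} 0. bd {{}} f = 0}
      = kdim TYPE('k) (bd {{}} ` chains TYPE('k) {{}} 1) + (if int 0 - 1 = m then 1 else 0)"
    using spec[OF sh[unfolded sphere_homology_def], where x="0::nat"] by (simp only: One_nat_def)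
  have c1: "chains TYPE('k) {{}} 1 = {0}"
  proof (rule equalityI; rule subsetI)
    fix f :: "nat set \<Rightarrow> 'k" assume "f \<in> chains TYPE('k) {{}} 1"
    then have "\<forall>\<sigma>. f \<sigma> \<noteq> 0 \<longrightarrow> \<sigma> \<in> {{}} \<and> card \<sigma> = 1" unfolding chains_def by simp
    then have "f \<sigma> = 0" for \<sigma> by fastforce
    then show "f \<in> {0}" by (simp add: fun_eq_iff)
  next
    fix f :: "nat set \<Rightarrow> 'k" assume "f \<in> {0}"
    then show "f \<in> chains TYPE('k) {{}} 1" unfolding chains_def by simp
  qed
  have "bd {{}} (0 :: nat set \<Rightarrow> 'k) = 0" by (rule bd_empty_cx)
  then have "bd {{}} ` chains TYPE('k) {{}} 1 = {0 :: nat set \<Rightarrow> 'k}" unfolding c1 by simp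
  then have k1: "kdim TYPE('k) (bd {{}} ` chains TYPE('k) {{}} 1) = 0" using kdim_zero by simp
  define \<delta> :: "nat set \<Rightarrow> 'k" where "\<delta> \<sigma> = (if \<sigma> = {} then 1 else 0)" for \<sigma>
  have k0: "kdim TYPE('k) {f \<in> chains TYPE('k) {{}} 0. bd {{}} f = 0} = 1"
  proof (rule kdim_line)
    show "\<delta> \<noteq> 0" unfolding \<delta>_def by (simp add: fun_eq_iff)
    show "\<delta> \<in> {f \<in> chains TYPE('k) {{}} 0. bd {{}} f = 0}"
      unfolding chains_def \<delta>_def by (simp add: bd_empty_cx)
    fix f assume "f \<in> {f \<in> chains TYPE('k) {{}} 0. bd {{}} f = 0}"
    then have "\<forall>\<sigma>. f \<sigma> \<noteq> 0 \<longrightarrow> \<sigma> = {}" unfolding chains_def by simp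
    then have "f = (\<lambda>x. f {} * \<delta> x)" unfolding \<delta>_def by (auto simp: fun_eq_iff)
    then show "\<exists>c. f = (\<lambda>x. c * \<delta> x)" by (rule exI)
  qed
  have eq2: "(1::nat) = 0 + (if int 0 - 1 = m then 1 else 0)" using eq unfolding k0 k1 .
  have "int 0 - 1 = m"
  proof (rule ccontr)
    assume "int 0 - 1 \<noteq> m"
    then have "(if int 0 - 1 = m then 1 else 0) = (0::nat)" by (simp only: if_False)
    then show False using eq2 by simp
  qed
  then show ?thesis unfolding m_def using sc_card[OF sc FD] by simp
qed

section \<open>Monomials\<close>

definition evm :: "(nat \<Rightarrow>\<^sub>0 nat) \<Rightarrow> (nat \<Rightarrow> 'a::comm_monoid_mult) \<Rightarrow> 'a" where
  "evm \<alpha> x = (\<Prod>j\<in>Poly_Mapping.keys \<alpha>. x j ^ Poly_Mapping.lookup \<alpha> j)"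

lemma evm_superset:
  assumes "finite S" "Poly_Mapping.keys \<alpha> \<subseteq> S"
  shows "evm \<alpha> x = (\<Prod>j\<in>S. x j ^ Poly_Mapping.lookup \<alpha> j)"
  unfolding evm_def
  by (rule prod.mono_neutral_left) (use assms in \<open>auto simp: in_keys_iff\<close>)

lemma evm_add: "evm (\<alpha> + \<beta>) x = evm \<alpha> x * evm \<beta> x"
proof -
  let ?S = "Poly_Mapping.keys \<alpha> \<union> Poly_Mapping.keys \<beta>"
  have fS: "finite ?S" by simp
  have "evm (\<alpha> + \<beta>) x = (\<Prod>j\<in>?S. x j ^ Poly_Mapping.lookup (\<alpha> + \<beta>) j)"
    by (rule evm_superset[OF fS keys_add])
  also have "\<dots> = (\<Prod>j\<in>?S. x j ^ Poly_Mapping.lookup \<alpha> j) * (\<Prod>j\<in>?S. x j ^ Poly_Mapping.lookup \<beta> j)"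
    by (simp add: lookup_add power_add prod.distrib)
  also have "\<dots> = evm \<alpha> x * evm \<beta> x"
    by (simp add: evm_superset[OF fS])
  finally show ?thesis .
qed

lemma evm_single: "evm (Poly_Mapping.single j 1) x = x j"
  unfolding evm_def by simp

lemma evm_zero_if:
  fixes x :: "nat \<Rightarrow> 'a::comm_semiring_1"
  assumes "j \<in> Poly_Mapping.keys \<alpha>" "x j = 0"
  shows "evm \<alpha> x = 0"
  unfolding evm_def
proof (rule prod_zero)
  show "finite (Poly_Mapping.keys \<alpha>)" by simp
  have "Poly_Mapping.lookup \<alpha> j \<noteq> 0" using assms(1) by (simp add: in_keys_iff)
  then show "\<exists>a\<in>Poly_Mapping.keys \<alpha>. x a ^ Poly_Mapping.lookup \<alpha> a = 0"
    using assms by (intro bexI[of _ j]) (simp_all add: zero_power)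
qed

lemma mdeg_superset:
  assumes "finite S" "Poly_Mapping.keys \<alpha> \<subseteq> S"
  shows "mdeg \<alpha> = (\<Sum>j\<in>S. Poly_Mapping.lookup \<alpha> j)"
  unfolding mdeg_def
  by (rule sum.mono_neutral_left) (use assms in \<open>auto simp: in_keys_iff\<close>)

lemma mdeg_add: "mdeg (\<alpha> + \<beta>) = mdeg \<alpha> + mdeg \<beta>"
proof -
  let ?S = "Poly_Mapping.keys \<alpha> \<union> Poly_Mapping.keys \<beta>"
  have fS: "finite ?S" by simp
  have "mdeg (\<alpha> + \<beta>) = (\<Sum>j\<in>?S. Poly_Mapping.lookup (\<alpha> + \<beta>) j)"
    by (rule mdeg_superset[OF fS keys_add])
  also have "\<dots> = mdeg \<alpha> + mdeg \<beta>"
    by (simp add: lookup_add sum.distrib mdeg_superset[OF fS])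
  finally show ?thesis .
qed

lemma mdeg_single: "mdeg (Poly_Mapping.single j 1) = 1"
  unfolding mdeg_def by simp

lemma keys_add_single: "Poly_Mapping.keys (\<alpha> + Poly_Mapping.single j (1::nat)) = insert j (Poly_Mapping.keys \<alpha>)"
  by (auto simp: in_keys_iff lookup_add lookup_single when_def split: if_splits)

lemma lookup_mono_of: "finite F \<Longrightarrow> Poly_Mapping.lookup (mono_of F) j = (if j \<in> F then 1 else 0)"
  unfolding mono_of_def by (simp add: lookup_sum lookup_single when_def)

lemma keys_mono_of: "finite F \<Longrightarrow> Poly_Mapping.keys (mono_of F) = F"
  by (auto simp: in_keys_iff lookup_mono_of split: if_splits)

section \<open>The functional psi\<close>

definition xF :: "nat \<Rightarrow> (nat \<Rightarrow> nat \<Rightarrow> 'k::field Khat) \<Rightarrow> nat set \<Rightarrow> nat \<Rightarrow> 'k Khat" where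
  "xF d \<mu> F j = (if j \<in> F then Xc d \<mu> F j else 0)"

definition den :: "nat \<Rightarrow> (nat \<Rightarrow> nat \<Rightarrow> 'k::field Khat) \<Rightarrow> nat set \<Rightarrow> 'k Khat" where
  "den d \<mu> F = bracket d (hat_col \<mu>) F * (\<Prod>j\<in>F. Xc d \<mu> F j)"

definition psi :: "'k::field itself \<Rightarrow> nat \<Rightarrow> nat set set \<Rightarrow> (nat set \<Rightarrow> nat list)
    \<Rightarrow> (nat \<Rightarrow> nat \<Rightarrow> 'k Khat) \<Rightarrow> (nat \<Rightarrow>\<^sub>0 nat) \<Rightarrow> 'k Khat" where
  "psi k d \<Delta> ori \<mu> \<alpha> = (\<Sum>F\<in>facets \<Delta>. eps k ori F * evm \<alpha> (xF d \<mu> F) / den d \<mu> F)"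

lemma facet_props:
  assumes "simplicial_complex n d \<Delta>" "F \<in> facets \<Delta>"
  shows "F \<in> \<Delta>" "F \<subseteq> {1..n}" "finite F" "0 \<notin> F"
proof -
  show FD: "F \<in> \<Delta>" using assms(2) unfolding facets_def by simp
  show sub: "F \<subseteq> {1..n}" by (rule sc_sub[OF assms(1) FD])
  show "finite F" using sub by (rule finite_subset) simp
  show "0 \<notin> F" using sub by auto
qed

lemma finite_facets: "simplicial_complex n d \<Delta> \<Longrightarrow> finite (facets \<Delta>)"
  using sc_finite unfolding facets_def by simp

lemma psi_rel:
  fixes \<mu> :: "nat \<Rightarrow> nat \<Rightarrow> 'k::field Khat"
  assumes sc: "simplicial_complex n d \<Delta>" and pure: "\<forall>F\<in>facets \<Delta>. card F = d"
    and i: "i \<in> {1..d}"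
  shows "(\<Sum>j\<in>{1..n}. \<mu> i j * psi TYPE('k) d \<Delta> ori \<mu> (\<beta> + Poly_Mapping.single j 1))
     = - (\<Sum>F\<in>facets \<Delta>. eps TYPE('k) ori F * evm \<beta> (xF d \<mu> F) / den d \<mu> F * bracket d (hat_col \<mu>) F) * avar i 0"
proof -
  define t where "t F = eps TYPE('k) ori F * evm \<beta> (xF d \<mu> F) / den d \<mu> F" for F
  have ps: "psi TYPE('k) d \<Delta> ori \<mu> (\<beta> + Poly_Mapping.single j 1) = (\<Sum>F\<in>facets \<Delta>. t F * xF d \<mu> F j)" for j
    unfolding psi_def t_def evm_add evm_single by (intro sum.cong refl) (simp add: divide_inverse ac_simps)
  have inner: "(\<Sum>j\<in>{1..n}. \<mu> i j * xF d \<mu> F j) = - (avar i 0 * bracket d (hat_col \<mu>) F)"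
    if F: "F \<in> facets \<Delta>" for F
  proof -
    have fp: "F \<subseteq> {1..n}" "finite F" "0 \<notin> F" using facet_props[OF sc F] by auto
    have "(\<Sum>j\<in>{1..n}. \<mu> i j * xF d \<mu> F j) = (\<Sum>j\<in>F. \<mu> i j * xF d \<mu> F j)"
      by (rule sum.mono_neutral_right) (use fp in \<open>auto simp: xF_def\<close>)
    also have "\<dots> = (\<Sum>j\<in>F. \<mu> i j * Xc d \<mu> F j)"
      by (intro sum.cong refl) (simp add: xF_def)
    also have "\<dots> = - (avar i 0 * bracket d (hat_col \<mu>) F)"
      by (rule laplace_X[OF fp(2) _ fp(3) i]) (use pure F in simp)
    finally show ?thesis .
  qed
  have "(\<Sum>j\<in>{1..n}. \<mu> i j * psi TYPE('k) d \<Delta> ori \<mu> (\<beta> + Poly_Mapping.single j 1))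
      = (\<Sum>j\<in>{1..n}. \<Sum>F\<in>facets \<Delta>. t F * (\<mu> i j * xF d \<mu> F j))"
    unfolding ps sum_distrib_left by (intro sum.cong refl) (simp add: ac_simps)
  also have "\<dots> = (\<Sum>F\<in>facets \<Delta>. t F * (\<Sum>j\<in>{1..n}. \<mu> i j * xF d \<mu> F j))"
    by (subst sum.swap) (simp add: sum_distrib_left)
  also have "\<dots> = (\<Sum>F\<in>facets \<Delta>. t F * (- (avar i 0 * bracket d (hat_col \<mu>) F)))"
    by (rule sum.cong[OF refl]) (simp only: inner)
  also have "\<dots> = - (\<Sum>F\<in>facets \<Delta>. t F * bracket d (hat_col \<mu>) F) * avar i 0"
    by (simp add: sum_distrib_left sum_negf mult.left_commute mult.commute)
  finally show ?thesis unfolding t_def .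
qed

lemma phi_psi:
  fixes \<Delta> :: "nat set set" and \<mu> :: "nat \<Rightarrow> nat \<Rightarrow> 'k::field Khat" and \<phi> :: "(nat \<Rightarrow>\<^sub>0 nat) \<Rightarrow> 'k Khat"
  assumes sc: "simplicial_complex n d \<Delta>" and d1: "d \<ge> 1"
    and pure: "\<forall>F\<in>facets \<Delta>. card F = d"
    and nzb: "\<forall>F\<in>facets \<Delta>. bracket d (hat_col \<mu>) F \<noteq> 0"
    and nzX: "\<forall>F\<in>facets \<Delta>. \<forall>j\<in>F. bracket d (hat_col \<mu>) (insert 0 F - {j}) \<noteq> 0"
    and dm: "is_deg_map TYPE('k) n d \<Delta> ori \<mu> \<phi>"
    and \<alpha>: "\<alpha> \<in> Mons n d"
  shows "\<phi> \<alpha> = psi TYPE('k) d \<Delta> ori \<mu> \<alpha>"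
  using \<alpha>
proof (induction "d - card (Poly_Mapping.keys \<alpha>)" arbitrary: \<alpha> rule: less_induct)
  case less
  let ?psi = "psi TYPE('k) d \<Delta> ori \<mu>"
  have dm2: "\<forall>\<alpha>\<in>Mons n d. Poly_Mapping.keys \<alpha> \<notin> \<Delta> \<longrightarrow> \<phi> \<alpha> = 0"
    and dm3: "\<forall>i\<in>{1..d}. \<forall>\<beta>\<in>Mons n (d - 1). (\<Sum>j=1..n. \<mu> i j * \<phi> (\<beta> + Poly_Mapping.single j 1)) = 0"
    and dm4: "\<forall>F\<in>facets \<Delta>. \<phi> (mono_of F) = eps TYPE('k) ori F / bracket d (hat_col \<mu>) F"
    using dm unfolding is_deg_map_def by auto
  define G where "G = Poly_Mapping.keys \<alpha>"
  have Gn: "G \<subseteq> {1..n}" and md: "mdeg \<alpha> = d" using less.prems unfolding Mons_def G_def by auto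
  have fG: "finite G" unfolding G_def by simp
  have mdG: "(\<Sum>j\<in>G. Poly_Mapping.lookup \<alpha> j) = d" using md unfolding mdeg_def G_def .
  have lk1: "j \<in> G \<Longrightarrow> Poly_Mapping.lookup \<alpha> j \<ge> 1" for j unfolding G_def by (simp add: in_keys_iff)
  have ffac: "finite (facets \<Delta>)" by (rule finite_facets[OF sc])
  show ?case
  proof (cases "G \<in> \<Delta>")
    case False
    have "\<phi> \<alpha> = 0" using dm2 less.prems False unfolding G_def by blast
    moreover have "?psi \<alpha> = 0" unfolding psi_def
    proof (rule sum.neutral, rule ballI)
      fix F assume F: "F \<in> facets \<Delta>"
      have "\<not> G \<subseteq> F"
      proof
        assume "G \<subseteq> F"
        then have "G \<in> \<Delta>" using sc_down[OF sc facet_props(1)[OF sc F]] by blast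
        then show False using False by simp
      qed
      then obtain j where j: "j \<in> G" "j \<notin> F" by blast
      have "evm \<alpha> (xF d \<mu> F) = 0"
        by (rule evm_zero_if[of j]) (use j in \<open>auto simp: G_def xF_def\<close>)
      then show "eps TYPE('k) ori F * evm \<alpha> (xF d \<mu> F) / den d \<mu> F = 0" by simp
    qed
    ultimately show ?thesis by simp
  next
    case GD: True
    have cG: "card G \<le> d" by (rule sc_card[OF sc GD])
    show ?thesis
    proof (cases "card G = d")
      case True
      have Gfac: "G \<in> facets \<Delta>" unfolding facets_def
      proof (intro CollectI conjI ballI impI)
        show "G \<in> \<Delta>" by (rule GD)
      next
        fix H assume H: "H \<in> \<Delta>" "G \<subseteq> H"
        have fH: "finite H" using sc_sub[OF sc H(1)] by (rule finite_subset) simp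
        have "card H \<le> card G" using sc_card[OF sc H(1)] True by simp
        moreover have "card G \<le> card H" using fH H(2) by (rule card_mono)
        ultimately have "card G = card H" by simp
        then show "H = G" using card_subset_eq[OF fH H(2)] by simp
      qed
      have all1: "\<forall>j\<in>G. Poly_Mapping.lookup \<alpha> j = 1"
      proof (rule ccontr)
        assume "\<not> (\<forall>j\<in>G. Poly_Mapping.lookup \<alpha> j = 1)"
        then obtain j where j: "j \<in> G" "Poly_Mapping.lookup \<alpha> j \<noteq> 1" by blast
        have gt: "1 < Poly_Mapping.lookup \<alpha> j" using lk1[OF j(1)] j(2) by linarith
        have "(\<Sum>j\<in>G. (1::nat)) < (\<Sum>j\<in>G. Poly_Mapping.lookup \<alpha> j)"
        proof (rule sum_strict_mono_ex1[OF fG])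
          show "\<forall>x\<in>G. 1 \<le> Poly_Mapping.lookup \<alpha> x" using lk1 by blast
          show "\<exists>a\<in>G. 1 < Poly_Mapping.lookup \<alpha> a" using j(1) gt by blast
        qed
        then show False using mdG True by simp
      qed
      have am: "\<alpha> = mono_of G"
      proof (rule poly_mapping_eqI)
        fix j
        have lm: "Poly_Mapping.lookup (mono_of G) j = (if j \<in> G then 1 else 0)" by (rule lookup_mono_of[OF fG])
        show "Poly_Mapping.lookup \<alpha> j = Poly_Mapping.lookup (mono_of G) j"
        proof (cases "j \<in> G")
          case True then show ?thesis using all1 lm by simp
        next
          case False then show ?thesis using lm unfolding G_def by (simp add: in_keys_iff)
        qed
      qed
      have ph: "\<phi> \<alpha> = eps TYPE('k) ori G / bracket d (hat_col \<mu>) G" using dm4 Gfac am by simp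
      have others: "eps TYPE('k) ori F * evm \<alpha> (xF d \<mu> F) / den d \<mu> F = 0"
        if F: "F \<in> facets \<Delta> - {G}" for F
      proof -
        have "\<not> G \<subseteq> F"
        proof
          assume "G \<subseteq> F"
          then have "F = G" using Gfac F unfolding facets_def by auto
          then show False using F by simp
        qed
        then obtain j where j: "j \<in> G" "j \<notin> F" by blast
        have "evm \<alpha> (xF d \<mu> F) = 0"
          by (rule evm_zero_if[of j]) (use j in \<open>auto simp: G_def xF_def\<close>)
        then show ?thesis by simp
      qed
      have "?psi \<alpha> = eps TYPE('k) ori G * evm \<alpha> (xF d \<mu> G) / den d \<mu> G
          + (\<Sum>F\<in>facets \<Delta> - {G}. eps TYPE('k) ori F * evm \<alpha> (xF d \<mu> F) / den d \<mu> F)"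
        unfolding psi_def using ffac Gfac by (rule sum.remove)
      also have "(\<Sum>F\<in>facets \<Delta> - {G}. eps TYPE('k) ori F * evm \<alpha> (xF d \<mu> F) / den d \<mu> F) = 0"
        using others by (rule sum.neutral[OF ballI])
      also have "evm \<alpha> (xF d \<mu> G) = (\<Prod>j\<in>G. Xc d \<mu> G j)"
        unfolding evm_def G_def[symmetric] using all1 by (intro prod.cong refl) (simp add: xF_def)
      finally have "?psi \<alpha> = eps TYPE('k) ori G * (\<Prod>j\<in>G. Xc d \<mu> G j)
           / (bracket d (hat_col \<mu>) G * (\<Prod>j\<in>G. Xc d \<mu> G j))" unfolding den_def by simp
      moreover have "(\<Prod>j\<in>G. Xc d \<mu> G j) \<noteq> 0"
      proof -
        have "\<forall>j\<in>G. Xc d \<mu> G j \<noteq> 0" using nzX Gfac unfolding Xc_def by simp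
        then show ?thesis using fG by simp
      qed
      ultimately show ?thesis using ph by simp
    next
      case False
      then have cGd: "card G < d" using cG by simp
      have "\<exists>j. j \<in> G \<and> 2 \<le> Poly_Mapping.lookup \<alpha> j"
      proof (rule ccontr)
        assume a: "\<nexists>j. j \<in> G \<and> 2 \<le> Poly_Mapping.lookup \<alpha> j"
        have "\<forall>j\<in>G. Poly_Mapping.lookup \<alpha> j = 1"
        proof
          fix j assume jG: "j \<in> G"
          have "\<not> (2 \<le> Poly_Mapping.lookup \<alpha> j)" using a jG by blast
          moreover have "1 \<le> Poly_Mapping.lookup \<alpha> j" by (rule lk1[OF jG])
          ultimately show "Poly_Mapping.lookup \<alpha> j = 1" by linarith
        qed
        then have "(\<Sum>j\<in>G. Poly_Mapping.lookup \<alpha> j) = card G" by simp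
        then show False using mdG cGd by simp
      qed
      then obtain j where j: "j \<in> G" "Poly_Mapping.lookup \<alpha> j \<ge> 2" by blast
      define \<beta> where "\<beta> = \<alpha> - Poly_Mapping.single j 1"
      have lb: "Poly_Mapping.lookup \<beta> x = Poly_Mapping.lookup \<alpha> x - (if x = j then 1 else 0)" for x
        unfolding \<beta>_def by (simp add: lookup_minus lookup_single when_def)
      have ab: "\<alpha> = \<beta> + Poly_Mapping.single j 1"
        by (rule poly_mapping_eqI) (use j in \<open>simp add: lookup_add lb lookup_single when_def\<close>)
      have kb: "Poly_Mapping.keys \<beta> = G"
        unfolding G_def using j lk1 by (auto simp: in_keys_iff lb G_def split: if_splits)
      have mdb: "mdeg \<beta> = d - 1" using md unfolding ab mdeg_add mdeg_single by simp
      have bM: "\<beta> \<in> Mons n (d - 1)" unfolding Mons_def using kb Gn mdb by simp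
      have bjM: "\<beta> + Poly_Mapping.single j' 1 \<in> Mons n d" if "j' \<in> {1..n}" for j'
      proof -
        have k: "Poly_Mapping.keys (\<beta> + Poly_Mapping.single j' 1) = insert j' G"
          by (simp only: keys_add_single kb)
        have "mdeg (\<beta> + Poly_Mapping.single j' 1) = d - 1 + 1" by (simp only: mdeg_add mdeg_single mdb)
        then have m: "mdeg (\<beta> + Poly_Mapping.single j' 1) = d" using d1 by simp
        show ?thesis unfolding Mons_def using k m that Gn by simp
      qed
      define D where "D j' = \<phi> (\<beta> + Poly_Mapping.single j' 1) - ?psi (\<beta> + Poly_Mapping.single j' 1)" for j'
      have Dout: "D j' = 0" if j': "j' \<in> {1..n} - G" for j'
      proof -
        have k: "Poly_Mapping.keys (\<beta> + Poly_Mapping.single j' 1) = insert j' G"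
          by (simp only: keys_add_single kb)
        have "card (Poly_Mapping.keys (\<beta> + Poly_Mapping.single j' 1)) = Suc (card G)"
          unfolding k using j' fG by simp
        then have "d - card (Poly_Mapping.keys (\<beta> + Poly_Mapping.single j' 1)) < d - card (Poly_Mapping.keys \<alpha>)"
          using cGd unfolding G_def by simp
        then show ?thesis unfolding D_def using less.hyps bjM j' by simp
      qed
      define Cb where "Cb = (\<Sum>F\<in>facets \<Delta>. eps TYPE('k) ori F * evm \<beta> (xF d \<mu> F) / den d \<mu> F * bracket d (hat_col \<mu>) F)"
      have relG: "(\<Sum>j'\<in>G. \<mu> i j' * D j') + avar i 0 * (- Cb) = 0" if i: "i \<in> {1..d}" for i
      proof -
        have r1: "(\<Sum>j'\<in>{1..n}. \<mu> i j' * \<phi> (\<beta> + Poly_Mapping.single j' 1)) = 0" using dm3 i bM by blast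
        have r2: "(\<Sum>j'\<in>{1..n}. \<mu> i j' * ?psi (\<beta> + Poly_Mapping.single j' 1)) = - Cb * avar i 0"
          unfolding Cb_def by (rule psi_rel[OF sc pure i])
        have "(\<Sum>j'\<in>{1..n}. \<mu> i j' * D j') = 0 - (- Cb * avar i 0)"
          unfolding D_def right_diff_distrib sum_subtractf r1 r2 ..
        moreover have "(\<Sum>j'\<in>{1..n}. \<mu> i j' * D j') = (\<Sum>j'\<in>G. \<mu> i j' * D j')"
          by (rule sum.mono_neutral_right) (use Gn Dout in auto)
        ultimately show ?thesis by (simp add: mult.commute)
      qed
      obtain F where F: "F \<in> facets \<Delta>" "G \<subseteq> F" using facet_above[OF sc GD] by blast
      have fp: "F \<subseteq> {1..n}" "finite F" "0 \<notin> F" using facet_props[OF sc F(1)] by auto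
      have cF: "card F = d" using pure F by simp
      have "\<exists>j0. j0 \<in> F \<and> j0 \<notin> G"
      proof (rule ccontr)
        assume "\<nexists>j0. j0 \<in> F \<and> j0 \<notin> G"
        then have "F \<subseteq> G" by blast
        then have "card F \<le> card G" using fG by (rule card_mono[rotated])
        then show False using cF cGd by simp
      qed
      then obtain j0 where j0: "j0 \<in> F" "j0 \<notin> G" by blast
      have "D j = 0"
      proof (rule indep[OF fp(2) cF fp(3) j0(1)])
        show "G \<subseteq> F - {j0}" using F(2) j0(2) by blast
        show "bracket d (hat_col \<mu>) (insert 0 F - {j0}) \<noteq> 0" using nzX F(1) j0(1) by blast
        show "\<forall>i\<in>{1..d}. (\<Sum>j\<in>G. \<mu> i j * D j) + avar i 0 * (- Cb) = 0" using relG by blast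
        show "j \<in> G" by (rule j(1))
      qed
      then show ?thesis unfolding D_def ab[symmetric] by simp
    qed
  qed
qed

theorem corollary2p7:
  fixes \<Delta> :: "nat set set" and n d :: nat and ori :: "nat set \<Rightarrow> nat list"
    and \<mu> :: "nat \<Rightarrow> nat \<Rightarrow> ('k::field) Khat"
    and g :: "(nat \<Rightarrow>\<^sub>0 nat) \<Rightarrow>\<^sub>0 'k"
    and \<phi> :: "(nat \<Rightarrow>\<^sub>0 nat) \<Rightarrow> 'k Khat"
  assumes "d \<ge> 2"
    and "simplicial_complex n d \<Delta>"
    and "connected_cx \<Delta>"
    and "homology_manifold TYPE('k) d \<Delta>"
    and "CHAR('k) \<noteq> 2 \<Longrightarrow> is_orientation d \<Delta> ori"
    and "\<forall>i\<in>{1..d}. \<forall>j\<in>{1..n}. \<mu> i j \<in> Kfield d n"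
    and "is_lsop d \<Delta> \<mu>"
    and "homogeneous n d g"
    and "is_deg_map TYPE('k) n d \<Delta> ori \<mu> \<phi>"
  shows "(\<forall>F\<in>facets \<Delta>. \<forall>j\<in>F. Xc d \<mu> F j \<noteq> 0) \<and>
         deg_eval \<phi> g =
           (\<Sum>F\<in>facets \<Delta>.
              eps TYPE('k) ori F * mpoly_eval g (\<lambda>j. if j \<in> F then Xc d \<mu> F j else 0)
              / (bracket d (hat_col \<mu>) F * (\<Prod>j\<in>F. Xc d \<mu> F j)))"
proof -
  note d2 = assms(1) and sc = assms(2) and hm = assms(4) and muK = assms(6)
    and lsop = assms(7) and hom = assms(8) and dm = assms(9)
  have d1: "d \<ge> 1" using d2 by simp
  have pure: "\<forall>F\<in>facets \<Delta>. card F = d"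
    using facet_card[OF sc d1 hm] by blast
  have nzb: "\<forall>F\<in>facets \<Delta>. bracket d (hat_col \<mu>) F \<noteq> 0"
    using lsop unfolding is_lsop_def .
  have nzX: "\<forall>F\<in>facets \<Delta>. \<forall>j\<in>F. bracket d (hat_col \<mu>) (insert 0 F - {j}) \<noteq> 0"
  proof (intro ballI)
    fix F j assume F: "F \<in> facets \<Delta>" and j: "j \<in> F"
    have fp: "F \<subseteq> {1..n}" "finite F" "0 \<notin> F" using facet_props[OF sc F] by auto
    have fr: "\<forall>i\<in>{1..d}. \<forall>j\<in>F. free0 (\<mu> i j)"
      using muK fp(1) Kfield_free0 by blast
    show "bracket d (hat_col \<mu>) (insert 0 F - {j}) \<noteq> 0"
      by (rule bracket_insert0_nonzero[OF fp(2) _ fp(3) j]) (use pure F nzb fr in auto)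
  qed
  have part1: "\<forall>F\<in>facets \<Delta>. \<forall>j\<in>F. Xc d \<mu> F j \<noteq> 0"
    using nzX unfolding Xc_def by simp
  have pp: "\<phi> \<alpha> = psi TYPE('k) d \<Delta> ori \<mu> \<alpha>" if "\<alpha> \<in> Mons n d" for \<alpha>
    by (rule phi_psi[OF sc d1 pure nzb nzX dm that])
  have kg: "Poly_Mapping.keys g \<subseteq> Mons n d" using hom unfolding homogeneous_def .
  define c where "c \<alpha> = of_k (Poly_Mapping.lookup g \<alpha>)" for \<alpha>
  have "deg_eval \<phi> g = (\<Sum>\<alpha>\<in>Poly_Mapping.keys g. c \<alpha> * psi TYPE('k) d \<Delta> ori \<mu> \<alpha>)"
    unfolding deg_eval_def c_def using kg pp by (intro sum.cong refl) auto
  also have "\<dots> = (\<Sum>\<alpha>\<in>Poly_Mapping.keys g. \<Sum>F\<in>facets \<Delta>.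
        eps TYPE('k) ori F * (c \<alpha> * evm \<alpha> (xF d \<mu> F)) / den d \<mu> F)"
    unfolding psi_def sum_distrib_left by (intro sum.cong refl) (simp add: divide_inverse ac_simps)
  also have "\<dots> = (\<Sum>F\<in>facets \<Delta>. \<Sum>\<alpha>\<in>Poly_Mapping.keys g.
        eps TYPE('k) ori F * (c \<alpha> * evm \<alpha> (xF d \<mu> F)) / den d \<mu> F)"
    by (rule sum.swap)
  also have "\<dots> = (\<Sum>F\<in>facets \<Delta>.
        eps TYPE('k) ori F * (\<Sum>\<alpha>\<in>Poly_Mapping.keys g. c \<alpha> * evm \<alpha> (xF d \<mu> F)) / den d \<mu> F)"
    by (intro sum.cong refl) (simp add: sum_distrib_left sum_divide_distrib)
  also have "\<dots> = (\<Sum>F\<in>facets \<Delta>.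
              eps TYPE('k) ori F * mpoly_eval g (\<lambda>j. if j \<in> F then Xc d \<mu> F j else 0)
              / (bracket d (hat_col \<mu>) F * (\<Prod>j\<in>F. Xc d \<mu> F j)))"
  proof (intro sum.cong refl)
    fix F
    have "xF d \<mu> F = (\<lambda>j. if j \<in> F then Xc d \<mu> F j else 0)" by (rule ext) (simp add: xF_def)
    then show "eps TYPE('k) ori F * (\<Sum>\<alpha>\<in>Poly_Mapping.keys g. c \<alpha> * evm \<alpha> (xF d \<mu> F)) / den d \<mu> F
      = eps TYPE('k) ori F * mpoly_eval g (\<lambda>j. if j \<in> F then Xc d \<mu> F j else 0)
              / (bracket d (hat_col \<mu>) F * (\<Prod>j\<in>F. Xc d \<mu> F j))"
      unfolding mpoly_eval_def den_def c_def evm_def by simp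
  qed
  finally show ?thesis using part1 by blast
qed

end
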